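(* For every $\mu>1/8$ there exists $n_0$ such that for every $n\ge n_0$ there is a Dirac graph $G$ on $n$ vertices and a $\mu n$-bounded colouring of $E(G)$ such that $G$ contains no rainbow Hamilton cycle.
   Context: A Dirac graph is a graph $G$ on $n$ vertices with $\delta(G)\ge n/2$. An edge-colouring is $k$-bounded if no colour appears on more than $k$ edges. A subgraph is rainbow if no two of its edges have the same colour. *)

theory Defs
  imports Complex_Main
begin

definition simple_graph :: "nat \<Rightarrow> nat set set \<Rightarrow> bool" where
  "simple_graph n E \<longleftrightarrow> (\<forall>e\<in>E. e \<subseteq> {0..<n} \<and> card e = 2)"

definition degree :: "nat \<Rightarrow> nat set set \<Rightarrow> nat \<Rightarrow> nat" where
  "degree n E v = card {u \<in> {0..<n}. {v, u} \<in> E}"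

definition dirac_graph :: "nat \<Rightarrow> nat set set \<Rightarrow> bool" where
  "dirac_graph n E \<longleftrightarrow> simple_graph n E \<and>
     (\<forall>v\<in>{0..<n}. real (degree n E v) \<ge> real n / 2)"

definition bounded_colouring :: "real \<Rightarrow> nat set set \<Rightarrow> (nat set \<Rightarrow> 'c) \<Rightarrow> bool" where
  "bounded_colouring k E c \<longleftrightarrow> (\<forall>x. real (card {e \<in> E. c e = x}) \<le> k)"

definition ham_cycle :: "nat \<Rightarrow> nat set set \<Rightarrow> nat list \<Rightarrow> bool" where
  "ham_cycle n E vs \<longleftrightarrow> n \<ge> 3 \<and> length vs = n \<and> distinct vs \<and> set vs = {0..<n} \<and>
     (\<forall>i<n. {vs ! i, vs ! ((i + 1) mod n)} \<in> E)"

definition cycle_edges :: "nat list \<Rightarrow> nat set set" where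
  "cycle_edges vs = {{vs ! i, vs ! ((i + 1) mod length vs)} | i. i < length vs}"

definition rainbow :: "(nat set \<Rightarrow> 'c) \<Rightarrow> nat set set \<Rightarrow> bool" where
  "rainbow c F \<longleftrightarrow> inj_on c F"

definition has_rainbow_ham_cycle :: "nat \<Rightarrow> nat set set \<Rightarrow> (nat set \<Rightarrow> 'c) \<Rightarrow> bool" where
  "has_rainbow_ham_cycle n E c \<longleftrightarrow> (\<exists>vs. ham_cycle n E vs \<and> rainbow c (cycle_edges vs))"

end

theory Submission
  imports Defs
begin


definition HE :: "nat \<Rightarrow> nat \<Rightarrow> nat set set" where
  "HE m d = {{u, (u+j) mod m} | u j. u < m \<and> 1 \<le> j \<and> j \<le> d}"
definition CE :: "nat \<Rightarrow> nat \<Rightarrow> nat set set" where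
  "CE n m = {{x,y} | x y. x < m \<and> m \<le> y \<and> y < n}"
definition st :: "nat \<Rightarrow> nat \<Rightarrow> nat set \<Rightarrow> nat" where
  "st m d e = (LEAST u. \<exists>j. u < m \<and> 1 \<le> j \<and> j \<le> d \<and> e = {u, (u+j) mod m})"
definition col :: "nat \<Rightarrow> nat \<Rightarrow> nat \<Rightarrow> nat \<Rightarrow> nat \<Rightarrow> nat set \<Rightarrow> nat" where
  "col n m d C L e = (if e \<subseteq> {..<m} then st m d e div L else C + Min e * n + Max e)"

lemma mod_ne: "u < m \<Longrightarrow> 0 < j \<Longrightarrow> j < (m::nat) \<Longrightarrow> (u + j) mod m \<noteq> u"
proof -
  assume a: "u < m" "0 < j" "j < m"
  show ?thesis
  proof (cases "u + j < m")
    case True thus ?thesis using a by simp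
  next
    case False
    hence "(u+j) mod m = u + j - m" using a by (simp add: le_mod_geq)
    thus ?thesis using a False by simp
  qed
qed

lemma st_prop: assumes "e \<in> HE m d"
  shows "\<exists>j. st m d e < m \<and> 1 \<le> j \<and> j \<le> d \<and> e = {st m d e, (st m d e + j) mod m}"
proof -
  from assms obtain u j where "u < m \<and> 1 \<le> j \<and> j \<le> d \<and> e = {u, (u+j) mod m}"
    unfolding HE_def by blast
  hence "\<exists>j. u < m \<and> 1 \<le> j \<and> j \<le> d \<and> e = {u, (u+j) mod m}" by blast
  from LeastI[of "\<lambda>u. \<exists>j. u < m \<and> 1 \<le> j \<and> j \<le> d \<and> e = {u, (u+j) mod m}", OF this]
  show ?thesis unfolding st_def by blast
qed

lemma simple:
  assumes "d < m" "m \<le> n"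
  shows "simple_graph n (HE m d \<union> CE n m)"
  unfolding simple_graph_def
proof
  fix e assume "e \<in> HE m d \<union> CE n m"
  then show "e \<subseteq> {0..<n} \<and> card e = 2"
  proof
    assume "e \<in> HE m d"
    then obtain u j where u: "u < m" "1 \<le> j" "j \<le> d" "e = {u, (u+j) mod m}"
      unfolding HE_def by blast
    have "(u+j) mod m \<noteq> u" using mod_ne[of u m j] u assms by simp
    moreover have "(u+j) mod m < n" proof -
      have "(u+j) mod m < m" using u(1) by simp
      thus ?thesis using assms(2) by linarith
    qed
    ultimately show ?thesis using u assms by auto
  next
    assume "e \<in> CE n m"
    then show ?thesis unfolding CE_def by auto
  qed
qed

lemma mod_small: "w < (m::nat) \<Longrightarrow> x < m \<Longrightarrow> (w + x) mod m = (if w + x < m then w + x else w + x - m)"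
  by (simp add: le_mod_geq)

lemma mod_inj: "inj_on (\<lambda>j. (v + j) mod m) {..<(m::nat)}"
proof (rule inj_onI)
  fix x y assume xy: "x \<in> {..<m}" "y \<in> {..<m}" "(v + x) mod m = (v + y) mod m"
  define w where "w = v mod m"
  have m: "0 < m" using xy by auto
  have w: "w < m" using m w_def by simp
  have "(w + x) mod m = (w + y) mod m" using xy unfolding w_def by (metis mod_add_left_eq)
  hence "(if w + x < m then w + x else w + x - m) = (if w + y < m then w + y else w + y - m)"
    using mod_small[OF w] xy by simp
  thus "x = y" using xy w by (auto split: if_splits)
qed

lemma HE_I: "u < m \<Longrightarrow> 1 \<le> j \<Longrightarrow> j \<le> d \<Longrightarrow> {u, (u+j) mod m} \<in> HE m d"
  unfolding HE_def by blast

lemma CE_I: "x < m \<Longrightarrow> m \<le> y \<Longrightarrow> y < n \<Longrightarrow> {x, y} \<in> CE n m"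
  unfolding CE_def by blast

lemma deg:
  assumes "1 \<le> d" "2*d < m" "m \<le> n" "m = n div 2 + 2*d" "v < n"
  shows "real n / 2 \<le> real (degree n (HE m d \<union> CE n m) v)"
proof -
  let ?N = "{u \<in> {0..<n}. {v, u} \<in> HE m d \<union> CE n m}"
  have fin: "finite ?N" by simp
  show ?thesis
  proof (cases "v < m")
    case True
    define J where "J = {1..d} \<union> {m-d..<m}"
    define S2 where "S2 = (\<lambda>j. (v+j) mod m) ` J"
    have Jsub: "J \<subseteq> {..<m}" using assms unfolding J_def by auto
    have dj: "{1..d} \<inter> {m-d..<m} = {}" using assms(2) by auto
    have cJ: "card J = 2*d" unfolding J_def
      using card_Un_disjoint[OF finite_atLeastAtMost finite_atLeastLessThan dj] assms(2) by simp
    have cS2: "card S2 = 2*d" unfolding S2_def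
      using card_image[OF inj_on_subset[OF mod_inj Jsub]] cJ by simp
    have S2m: "S2 \<subseteq> {..<m}" unfolding S2_def using assms by auto
    have disj: "{m..<n} \<inter> S2 = {}" using S2m by auto
    have sub: "{m..<n} \<union> S2 \<subseteq> ?N"
    proof
      fix u assume "u \<in> {m..<n} \<union> S2"
      then show "u \<in> ?N"
      proof
        assume "u \<in> {m..<n}"
        hence "{v,u} \<in> CE n m" using True by (intro CE_I) auto
        thus ?thesis using \<open>u \<in> {m..<n}\<close> by auto
      next
        assume "u \<in> S2"
        then obtain j where j: "j \<in> J" "u = (v+j) mod m" unfolding S2_def by auto
        have "u < m" using subsetD[OF S2m \<open>u \<in> S2\<close>] by simp
        hence un: "u < n" using assms(3) by (rule less_le_trans)
        have "{v,u} \<in> HE m d"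
        proof (cases "j \<le> d")
          case True
          have "1 \<le> j" using j(1) True assms(2) unfolding J_def by auto
          then show ?thesis using j(2) \<open>v < m\<close> True HE_I by simp
        next
          case False
          hence jj: "m - d \<le> j" "j < m" using j(1) unfolding J_def by auto
          have um: "u < m" by fact
          have "(u + (m - j)) mod m = (v + j + (m - j)) mod m" using j by (metis mod_add_left_eq)
          also have "\<dots> = (v + m) mod m" using jj by simp
          also have "\<dots> = v" using \<open>v < m\<close> by simp
          finally have e: "(u + (m - j)) mod m = v" .
          have j1: "1 \<le> m - j" "m - j \<le> d" using jj by arith+
          have "{u, (u + (m-j)) mod m} \<in> HE m d" using um j1 by (rule HE_I)
          thus ?thesis using e by (simp add: insert_commute)
        qed
        thus ?thesis using un by auto
      qed
    qed
    have "card ({m..<n} \<union> S2) = (n - m) + 2*d" using disj cS2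
      by (subst card_Un_disjoint) (auto simp: S2_def J_def)
    hence "(n - m) + 2*d \<le> degree n (HE m d \<union> CE n m) v"
      unfolding degree_def using card_mono[OF fin sub] by simp
    moreover have "(n - m) + 2*d = n - n div 2" using assms by simp
    moreover have "n \<le> 2 * (n - n div 2)" by simp
    ultimately have "n \<le> 2 * degree n (HE m d \<union> CE n m) v" by linarith
    hence "real n \<le> 2 * real (degree n (HE m d \<union> CE n m) v)" by linarith
    thus ?thesis by simp
  next
    case False
    have sub: "{..<m} \<subseteq> ?N"
    proof
      fix u assume u: "u \<in> {..<m}"
      hence "{u,v} \<in> CE n m" using False assms by (intro CE_I) auto
      thus "u \<in> ?N" using u assms by (auto simp: insert_commute)
    qed
    have "m \<le> degree n (HE m d \<union> CE n m) v"
      unfolding degree_def using card_mono[OF fin sub] by simp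
    moreover have "n \<le> 2 * m" using assms by simp
    ultimately have "n \<le> 2 * degree n (HE m d \<union> CE n m) v" by linarith
    hence "real n \<le> 2 * real (degree n (HE m d \<union> CE n m) v)" by linarith
    thus ?thesis by simp
  qed
qed

lemma div_blk: "0 < (L::nat) \<Longrightarrow> u div L = x \<Longrightarrow> x * L \<le> u \<and> u < x * L + L"
  by (metis add.commute div_times_less_eq_dividend dividend_less_times_div mult.commute)

lemma div_lt: "u < L * (C::nat) \<Longrightarrow> u div L < C"
  by (simp add: less_mult_imp_div_less mult.commute)

lemma lin_uniq: "(a::nat) * n + b = a' * n + b' \<Longrightarrow> b < n \<Longrightarrow> b' < n \<Longrightarrow> a = a' \<and> b = b'"
  by (metis add_right_cancel bot_nat_0.extremum_strict mod_if mod_mult_self3 mult_cancel2)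

lemma CE_not_sub: "e \<in> CE n m \<Longrightarrow> \<not> e \<subseteq> {..<m}"
  unfolding CE_def by auto

lemma HE_sub: assumes "e \<in> HE m d" shows "e \<subseteq> {..<m}"
proof -
  obtain j where j: "st m d e < m" "e = {st m d e, (st m d e + j) mod m}" using st_prop[OF assms] by blast
  have m0: "0 < m" using j(1) by simp
  have "{st m d e, (st m d e + j) mod m} \<subseteq> {..<m}" using j(1) m0 by simp
  thus ?thesis using j(2) by simp
qed

lemma col_lt:
  assumes "e \<in> HE m d" "C > 0" "L = m div C + 1"
  shows "col n m d C L e < C"
proof -
  have j: "st m d e < m" using st_prop[OF assms(1)] by blast
  have "m < L * C" using assms(2,3) by (metis add.commute div_mult_mod_eq mod_less_divisor mult.commute mult_Suc_right nat_add_left_cancel_less plus_1_eq_Suc)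
  hence "st m d e div L < C" using j by (intro div_lt) linarith
  thus ?thesis unfolding col_def using HE_sub[OF assms(1)] by simp
qed

lemma bnd:
  assumes "d < m" "m \<le> n" "C > 0" "L = m div C + 1" "real (L*d) \<le> k" "1 \<le> k"
  shows "bounded_colouring k (HE m d \<union> CE n m) (col n m d C L)"
  unfolding bounded_colouring_def
proof
  fix x
  let ?E = "HE m d \<union> CE n m"
  let ?Q = "{e \<in> ?E. col n m d C L e = x}"
  have Esub: "?E \<subseteq> Pow {0..<n}" using simple[OF assms(1,2)] unfolding simple_graph_def by auto
  have finQ: "finite ?Q" by (rule finite_subset[of _ "Pow {0..<n}"]) (use Esub in auto)
  show "real (card ?Q) \<le> k"
  proof (cases "x < C")
    case True
    let ?f = "\<lambda>(u,j). {u, (u+j) mod m}"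
    have sub: "?Q \<subseteq> ?f ` ({x*L..<x*L+L} \<times> {1..d})"
    proof
      fix e assume e: "e \<in> ?Q"
      have "e \<in> HE m d"
      proof (rule ccontr)
        assume "e \<notin> HE m d"
        hence "e \<in> CE n m" using e by auto
        hence "col n m d C L e \<ge> C" unfolding col_def using CE_not_sub by auto
        thus False using e True by auto
      qed
      then obtain j where j: "st m d e < m" "1 \<le> j" "j \<le> d" "e = {st m d e, (st m d e + j) mod m}"
        using st_prop by blast
      have "st m d e div L = x" using e HE_sub[OF \<open>e \<in> HE m d\<close>] unfolding col_def by simp
      hence "st m d e \<in> {x*L..<x*L+L}" using assms(4) div_blk[of L "st m d e" x] by simp
      hence "(st m d e, j) \<in> {x*L..<x*L+L} \<times> {1..d}" using j by simp
      moreover have "e = ?f (st m d e, j)" using j by simp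
      ultimately show "e \<in> ?f ` ({x*L..<x*L+L} \<times> {1..d})" by (rule rev_image_eqI)
    qed
    have "card ?Q \<le> card (?f ` ({x*L..<x*L+L} \<times> {1..d}))"
      by (rule card_mono[OF _ sub]) simp
    also have "\<dots> \<le> card ({x*L..<x*L+L} \<times> {1..d})" by (rule card_image_le) simp
    also have "\<dots> = L * d" by (simp add: card_cartesian_product)
    finally have "card ?Q \<le> L * d" .
    hence "real (card ?Q) \<le> real (L*d)" by linarith
    thus ?thesis using assms(5) by linarith
  next
    case False
    have one: "a = b" if a: "a \<in> ?Q" and b: "b \<in> ?Q" for a b
    proof -
      have aC: "a \<in> CE n m"
      proof (rule ccontr)
        assume "a \<notin> CE n m"
        hence "a \<in> HE m d" using a by auto
        thus False using col_lt[OF _ assms(3,4)] a False by fastforce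
      qed
      have bC: "b \<in> CE n m"
      proof (rule ccontr)
        assume "b \<notin> CE n m"
        hence "b \<in> HE m d" using b by auto
        thus False using col_lt[OF _ assms(3,4)] b False by fastforce
      qed
      obtain a1 a2 where A: "a = {a1,a2}" "a1 < m" "m \<le> a2" "a2 < n" using aC unfolding CE_def by blast
      obtain b1 b2 where B: "b = {b1,b2}" "b1 < m" "m \<le> b2" "b2 < n" using bC unfolding CE_def by blast
      have ma: "Min a = a1" "Max a = a2" using A by auto
      have mb: "Min b = b1" "Max b = b2" using B by auto
      have "col n m d C L a = C + a1 * n + a2" unfolding col_def using CE_not_sub[OF aC] ma by simp
      moreover have "col n m d C L b = C + b1 * n + b2" unfolding col_def using CE_not_sub[OF bC] mb by simp
      ultimately have "a1 * n + a2 = b1 * n + b2" using a b by simp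
      hence "a1 = b1 \<and> a2 = b2" using lin_uniq A B by blast
      thus "a = b" using A B by simp
    qed
    have "card ?Q \<le> 1" using card_le_Suc0_iff_eq[OF finQ] one by auto
    hence "real (card ?Q) \<le> 1" by linarith
    thus ?thesis using assms(6) by linarith
  qed
qed

lemma cyc_inj:
  assumes "distinct vs" "length vs = n" "3 \<le> n"
  shows "inj_on (\<lambda>i. {vs!i, vs!((i+1) mod n)}) {..<n}"
proof (rule inj_onI)
  fix i j assume i: "i \<in> {..<n}" and j: "j \<in> {..<n}"
    and h: "{vs!i, vs!((i+1) mod n)} = {vs!j, vs!((j+1) mod n)}"
  have n0: "0 < n" using assms by simp
  have i1: "(i+1) mod n < n" "(j+1) mod n < n" using n0 by simp_all
  have eq: "\<And>a b. a < n \<Longrightarrow> b < n \<Longrightarrow> vs!a = vs!b \<Longrightarrow> a = b"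
    using assms(1,2) nth_eq_iff_index_eq by metis
  show "i = j"
  proof (cases "vs!i = vs!j")
    case True thus ?thesis using eq i j by simp
  next
    case False
    hence "vs!i = vs!((j+1) mod n) \<and> vs!((i+1) mod n) = vs!j" using h by (auto simp: doubleton_eq_iff)
    hence e1: "i = (j+1) mod n" and e2: "(i+1) mod n = j" using eq i j i1 by auto
    have "i = ((i+1) mod n + 1) mod n" using e1 e2 by simp
    also have "\<dots> = (i + 1 + 1) mod n" by (rule mod_add_left_eq)
    also have "\<dots> = (i + 2) mod n" by (simp add: add.assoc)
    finally have "(i+2) mod n = i" by simp
    moreover have "(i+2) mod n \<noteq> i" using mod_ne[of i n 2] i assms(3) by simp
    ultimately show ?thesis by simp
  qed
qed

lemma nohc:
  assumes "C > 0" "L = m div C + 1" "m \<le> n" "n + C + 1 \<le> 2*m"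
  shows "\<not> has_rainbow_ham_cycle n (HE m d \<union> CE n m) (col n m d C L)"
proof
  let ?E = "HE m d \<union> CE n m"
  let ?c = "col n m d C L"
  assume "has_rainbow_ham_cycle n ?E ?c"
  then obtain vs where hc: "ham_cycle n ?E vs" and rb: "inj_on ?c (cycle_edges vs)"
    unfolding has_rainbow_ham_cycle_def rainbow_def by blast
  have n3: "3 \<le> n" and len: "length vs = n" and dis: "distinct vs" and sv: "set vs = {0..<n}"
    and ed: "\<And>i. i < n \<Longrightarrow> {vs ! i, vs ! ((i + 1) mod n)} \<in> ?E"
    using hc unfolding ham_cycle_def by auto
  define A where "A = {i. i < n \<and> vs!i < m}"
  define B where "B = {i. i < n \<and> \<not> vs!i < m}"
  define A' where "A' = {i \<in> A. \<not> vs!((i+1) mod n) < m}"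
  define I where "I = {i \<in> A. vs!((i+1) mod n) < m}"
  have injA: "inj_on (nth vs) A" using dis len unfolding A_def by (intro inj_on_nth) auto
  have imA: "nth vs ` A = {..<m}"
  proof
    show "nth vs ` A \<subseteq> {..<m}" unfolding A_def by auto
    show "{..<m} \<subseteq> nth vs ` A"
    proof
      fix y assume y: "y \<in> {..<m}"
      hence "y \<in> set vs" using sv assms(3) by auto
      then obtain i where "i < length vs" "vs!i = y" by (auto simp: in_set_conv_nth)
      thus "y \<in> nth vs ` A" unfolding A_def using y len by auto
    qed
  qed
  have cA: "card A = m" using card_image[OF injA] imA by simp
  have AB: "A \<union> B = {..<n}" "A \<inter> B = {}" unfolding A_def B_def by auto
  have cB: "card B = n - m"
  proof -
    have "card A + card B = n" using card_Un_disjoint[of A B] AB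
      by (metis card_lessThan finite_Un finite_lessThan)
    thus ?thesis using cA by simp
  qed
  have finA: "finite A" unfolding A_def by simp
  have "inj_on (\<lambda>i. (1 + i) mod n) {..<n}" by (rule mod_inj)
  hence injg: "inj_on (\<lambda>i. (1 + i) mod n) A'" by (rule inj_on_subset) (auto simp: A'_def A_def)
  have "(\<lambda>i. (1 + i) mod n) ` A' \<subseteq> B"
  proof
    fix y assume "y \<in> (\<lambda>i. (1 + i) mod n) ` A'"
    then obtain i where "i \<in> A'" "y = (1 + i) mod n" by auto
    moreover have "0 < n" using n3 by simp
    ultimately show "y \<in> B" unfolding A'_def B_def by (simp add: add.commute)
  qed
  have finB: "finite B" unfolding B_def by simp
  have "card A' = card ((\<lambda>i. (1 + i) mod n) ` A')" using card_image[OF injg] by simp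
  also have "\<dots> \<le> card B" by (rule card_mono[OF finB]) fact
  finally have cA': "card A' \<le> n - m" using cB by simp
  have AI: "A = I \<union> A'" "I \<inter> A' = {}" unfolding I_def A'_def by auto
  have fI: "finite I" "finite A'" using finA unfolding I_def A'_def by auto
  have "card A = card I + card A'" unfolding AI(1) by (rule card_Un_disjoint[OF fI AI(2)])
  hence cI2: "C + 1 \<le> card I" using assms(3,4) cA cA' by arith
  let ?h = "\<lambda>i. {vs!i, vs!((i+1) mod n)}"
  have injh: "inj_on ?h I" using cyc_inj[OF dis len n3] by (rule inj_on_subset) (auto simp: I_def A_def)
  have hsub: "?h ` I \<subseteq> cycle_edges vs"
  proof
    fix e assume "e \<in> ?h ` I"
    then obtain i where i: "i \<in> I" "e = ?h i" by auto
    have "i < length vs" using i len unfolding I_def A_def by simp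
    thus "e \<in> cycle_edges vs" unfolding cycle_edges_def using i(2) len by (intro CollectI exI[of _ i]) simp
  qed
  have hlt: "?c e < C" if ein: "e \<in> ?h ` I" for e
  proof -
    obtain i where i: "i \<in> I" "e = ?h i" using ein by auto
    have "e \<in> ?E" using ed i unfolding I_def A_def by auto
    moreover have "e \<subseteq> {..<m}" using i unfolding I_def A_def by auto
    ultimately have "e \<in> HE m d" using CE_not_sub by blast
    thus ?thesis by (rule col_lt[OF _ assms(1,2)])
  qed
  have "inj_on ?c (?h ` I)" using rb hsub by (rule inj_on_subset)
  hence "card (?c ` ?h ` I) = card I" using card_image injh by (metis card_image)
  moreover have "?c ` ?h ` I \<subseteq> {..<C}" using hlt by auto
  ultimately have "card I \<le> C" by (metis card_lessThan card_mono finite_lessThan)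
  thus False using cI2 by simp
qed


lemma r1: fixes D N M \<mu> \<eta> :: real
  assumes "D \<ge> 1" "\<eta> = \<mu> - D/(8*D-4)" "\<eta>*N \<ge> D^2+D" "M \<le> N/2 + 2*D" "0 \<le> M"
  shows "(M/(4*D-2) + 1)*D \<le> \<mu>*N"
proof -
  have p: "4*D-2 > 0" using assms(1) by simp
  have p2: "8*D-4 > 0" using assms(1) by simp
  have q: "8*D-4 = 2*(4*D-2)" by simp
  have "M/(4*D-2) \<le> (N/2 + 2*D)/(4*D-2)" using assms(4) p by (simp add: divide_right_mono)
  also have "\<dots> = N/(8*D-4) + 2*D/(4*D-2)" unfolding q using p by (simp add: add_divide_distrib)
  also have "2*D/(4*D-2) \<le> D" using p assms(1) by (simp add: field_simps)
  hence "N/(8*D-4) + 2*D/(4*D-2) \<le> N/(8*D-4) + D" by simp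
  finally have "(M/(4*D-2) + 1)*D \<le> (N/(8*D-4) + D + 1)*D" using assms(1) by (intro mult_right_mono) auto
  also have "\<dots> = N*D/(8*D-4) + D^2 + D" by (simp add: algebra_simps power2_eq_square)
  also have "\<dots> \<le> \<mu>*N"
  proof -
    have "\<mu>*N = (\<eta> + D/(8*D-4))*N" using assms(2) by simp
    also have "\<dots> = \<eta>*N + N*D/(8*D-4)" by (simp add: distrib_right)
    finally have "\<mu>*N = \<eta>*N + N*D/(8*D-4)" .
    thus ?thesis using assms(3) by linarith
  qed
  finally show ?thesis .
qed
lemma r2: fixes D \<mu> :: real
  assumes "\<mu> > 1/8" "D > 1/(\<mu> - 1/8)" "D \<ge> 1"
  shows "\<mu> - D/(8*D-4) > 0"
proof -
  have d0: "\<mu> - 1/8 > 0" using assms by simp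
  have "D*(\<mu> - 1/8) > 1" using assms(2) d0 by (simp add: field_simps)
  hence "(16*D-8)*(\<mu> - 1/8) > 1" using assms(3) d0 by (smt (verit) mult_right_mono)
  hence "1/(16*D-8) < \<mu> - 1/8" using assms(3) by (simp add: field_simps)
  moreover have "D/(8*D-4) = 1/8 + 1/(16*D-8)" using assms(3) by (simp add: field_simps)
  ultimately show ?thesis by simp
qed

theorem mainTheorem2:
  fixes \<mu> :: real
  assumes "\<mu> > 1/8"
  shows "\<exists>n0::nat. \<forall>n\<ge>n0. \<exists>(E::nat set set) (c::nat set \<Rightarrow> nat).
           dirac_graph n E \<and> bounded_colouring (\<mu> * real n) E c \<and>
           \<not> has_rainbow_ham_cycle n E c"
proof -
  define d :: nat where "d = nat \<lceil>1/(\<mu> - 1/8)\<rceil> + 1"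
  have d1: "1 \<le> d" unfolding d_def by simp
  have "1/(\<mu> - 1/8) \<le> real (nat \<lceil>1/(\<mu> - 1/8)\<rceil>)" by (rule real_nat_ceiling_ge)
  hence dD: "real d > 1/(\<mu> - 1/8)" unfolding d_def by simp
  have dR: "real d \<ge> 1" using d1 by simp
  define \<eta> where "\<eta> = \<mu> - real d/(8*real d - 4)"
  have eta: "\<eta> > 0" unfolding \<eta>_def by (rule r2[OF assms dD dR])
  define n0 where "n0 = max (nat \<lceil>(real d^2 + real d)/\<eta>\<rceil>) (4*d+8)"
  show ?thesis
  proof (intro exI[of _ n0] allI impI)
    fix n assume nn: "n0 \<le> n"
    define m where "m = n div 2 + 2*d"
    define C where "C = 4*d - 2"
    define L where "L = m div C + 1"
    have n1: "4*d+8 \<le> n" using nn unfolding n0_def by simp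
    have "(real d^2 + real d)/\<eta> \<le> real (nat \<lceil>(real d^2 + real d)/\<eta>\<rceil>)" by (rule real_nat_ceiling_ge)
    also have "\<dots> \<le> real n" using nn unfolding n0_def by simp
    finally have etan: "real d^2 + real d \<le> \<eta> * real n" using eta by (simp add: pos_divide_le_eq mult.commute)
    have mn: "m \<le> n" "2*d < m" "d < m" "n + C + 1 \<le> 2*m" "m = n div 2 + 2*d" using n1 d1 unfolding m_def C_def by arith+
    have C0: "C > 0" using d1 unfolding C_def by simp
    have rC: "real C = 4*real d - 2" using d1 unfolding C_def by (simp add: of_nat_diff)
    have rm: "real m \<le> real n/2 + 2*real d" unfolding m_def using of_nat_div_le_of_nat[of n 2, where ?'a=real] by simp
    have "real (L*d) = (real (m div C) + 1) * real d" unfolding L_def by (simp add: algebra_simps)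
    also have "\<dots> \<le> (real m / real C + 1) * real d" using of_nat_div_le_of_nat[of m C, where ?'a=real] by (intro mult_right_mono) auto
    also have "\<dots> \<le> \<mu> * real n" unfolding rC by (rule r1[OF dR \<eta>_def etan rm]) simp
    finally have bL: "real (L*d) \<le> \<mu> * real n" .
    have "real n \<ge> 8" using n1 by linarith
    hence "(1/8) * 8 \<le> \<mu> * real n" using assms by (intro mult_mono) auto
    hence b1: "1 \<le> \<mu> * real n" by simp
    let ?E = "HE m d \<union> CE n m"
    have "dirac_graph n ?E" unfolding dirac_graph_def
      using simple[OF mn(3,1)] deg[OF d1 mn(2,1,5)] by simp
    moreover have "bounded_colouring (\<mu> * real n) ?E (col n m d C L)"
      by (rule bnd[OF mn(3,1) C0 L_def bL b1])
    moreover have "\<not> has_rainbow_ham_cycle n ?E (col n m d C L)"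
      by (rule nohc[OF C0 L_def mn(1,4)])
    ultimately show "\<exists>(E::nat set set) (c::nat set \<Rightarrow> nat).
           dirac_graph n E \<and> bounded_colouring (\<mu> * real n) E c \<and>
           \<not> has_rainbow_ham_cycle n E c" by blast
  qed
qed

end
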